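(* Let $\sigma=\tanh$, $d\in\mathbb N$, $w_1,\dots,w_m\in\mathbb R^d$ and $a_1,\dots,a_m\in\mathbb R$. Then $$\dim\operatorname{span}\{\sigma(w_i^\top x),\ a_i\sigma'(w_i^\top x)x_1,\ \dots,\ a_i\sigma'(w_i^\top x)x_d\}_{i=1}^m=m_w+m_a d,$$ where $m_w=\frac12\left|\{w_i,-w_i: w_i\neq0,\ i\in[m]\}\right|$ and $m_a=\frac12\left|\{w_i,-w_i: w_i\neq0,\ a_i\neq0,\ i\in[m]\}\right|+\left|\{w_i: w_i=0,\ a_i\neq0,\ i\in[m]\}\right|$ ($|\cdot|$ denotes the number of distinct elements of a set). Equivalently, this is the model rank of $f_\theta(x)=\sum_{i=1}^m a_i\tanh(w_i^\top x)$ at $\theta=(a_i,w_i)_{i=1}^m$.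
   Context: The span is taken in the vector space of real functions of $x\in\mathbb R^d$; $x_t$ is the $t$-th coordinate of $x$. The model rank of a model $f_\theta$ at $\theta$ is $\dim\operatorname{span}\{\partial_{\theta_i}f(\cdot;\theta)\}_i$. *)

theory Defs
  imports "HOL-Analysis.Analysis" "HOL-Library.Function_Algebras"
begin

definition fscale :: "real \<Rightarrow> ('a \<Rightarrow> real) \<Rightarrow> ('a \<Rightarrow> real)" where
  "fscale c f = (\<lambda>x. c * f x)"

abbreviation fun_span :: "('a \<Rightarrow> real) set \<Rightarrow> ('a \<Rightarrow> real) set" where
  "fun_span S \<equiv> Modules.module.span fscale S"

abbreviation fun_dim :: "('a \<Rightarrow> real) set \<Rightarrow> nat" where
  "fun_dim S \<equiv> Vector_Spaces.vector_space.dim fscale S"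

lemma vector_space_fscale: "Vector_Spaces.vector_space (fscale :: real \<Rightarrow> ('a \<Rightarrow> real) \<Rightarrow> _)"
  by unfold_locales (auto simp: fscale_def algebra_simps fun_eq_iff)

end

theory Submission
  imports Defs "HOL-Real_Asymp.Real_Asymp"
begin


lemma alg1: assumes "(E::real) > 0" shows "(1 - 1/E)/(1+1/E) = (E - 1)/(E + 1)"
proof -
  have a: "1 - 1/E = (E-1)/E" "1+1/E = (E+1)/E" using assms by (auto simp: field_simps)
  have "E + 1 > 0" using assms by simp
  have "((E-1)/E)/((E+1)/E) = (E-1)/(E+1)" using assms by (simp add: divide_inverse)
  then show ?thesis unfolding a .
qed
lemma tanh_exp2: "tanh (z::real) = (exp (2*z) - 1) / (exp (2*z) + 1)"
proof -
  have e: "exp (- 2 * z) = 1 / exp (2*z)" by (simp add: exp_minus field_simps)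
  show ?thesis unfolding tanh_real_altdef e by (rule alg1) simp
qed
lemma alg2: "(E::real) > 0 \<Longrightarrow> (E - 1)/(E + 1) - 1 = -2/(E+1)"
  by (simp add: field_simps)
lemma alg3: "(E::real) > 0 \<Longrightarrow> (E - 1)/(E + 1) + 1 = 2*E/(E+1)"
  by (simp add: field_simps)
lemma alg4: assumes "(E::real) > 0" shows "1 - ((E - 1)/(E + 1))^2 = 4*E/(E+1)^2"
proof -
  have "E + 1 > 0" using assms by simp
  then have d: "(E+1)^2 \<noteq> 0" by simp
  have "1 - ((E - 1)/(E + 1))^2 = ((E+1)^2 - (E-1)^2)/(E+1)^2"
    using d by (simp only: power_divide diff_divide_distrib[symmetric]) (simp add: diff_divide_distrib)
  also have "(E+1)^2 - (E-1)^2 = 4*E" by (simp add: power2_eq_square algebra_simps)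
  finally show ?thesis .
qed
lemma tanh_m1: "tanh (z::real) - 1 = -2 / (exp (2*z) + 1)"
  unfolding tanh_exp2 by (rule alg2) simp
lemma tanh_p1: "tanh (z::real) + 1 = 2*exp (2*z) / (exp (2*z) + 1)"
  unfolding tanh_exp2 by (rule alg3) simp
lemma D_eq: "1 - tanh (z::real)^2 = 4*exp (2*z) / (exp (2*z) + 1)^2"
  unfolding tanh_exp2 by (rule alg4) simp

lemma E1: fixes c e :: real assumes "c > 0" shows "((\<lambda>x. exp (2*c*x) * (-2 / (exp (2*(c*x+e)) + 1))) \<longlongrightarrow> -2*inverse (exp(2*e))) at_top"
  using assms by real_asymp
lemma E2: fixes c e :: real assumes "c > 0" shows "((\<lambda>x. exp (2*c*x) * (4*exp (2*(c*x+e)) / (exp (2*(c*x+e)) + 1)^2)) \<longlongrightarrow> 4*inverse (exp(2*e))) at_top"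
proof -
  have "((\<lambda>x. exp (2*c*x) * (4*exp (2*(c*x+e)) / (exp (2*(c*x+e)) + 1)^2)) \<longlongrightarrow> 4 * exp (2 * e) * inverse ((exp (2 * e))\<^sup>2)) at_top"
    using assms by real_asymp
  moreover have "4 * exp (2 * e) * inverse ((exp (2 * e))\<^sup>2) = 4*inverse (exp(2*e))"
    by (simp add: power2_eq_square)
  ultimately show ?thesis by simp
qed
lemma expid: "exp (-(2*(c-u)*x)) * exp (2*c*x) = exp (2*u*(x::real))"
  by (simp add: mult_exp_exp algebra_simps)
lemma expid2: "exp (-(2*(c-u)*x)) * (exp (2*c*x) * C) = exp (2*u*(x::real)) * C"
  by (simp only: expid mult.assoc[symmetric])
lemma Ldec: fixes d :: real assumes "d > 0" shows "((\<lambda>x. exp (-(d*x))) \<longlongrightarrow> 0) at_top"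
  using assms by real_asymp
lemma Ldec2: fixes d :: real assumes "d > 0" shows "((\<lambda>x. x * exp (-(d*x))) \<longlongrightarrow> 0) at_top"
  using assms by real_asymp
lemma G1: fixes c e u :: real assumes "c > u" "u \<ge> 0" shows "((\<lambda>x. exp (2*u*x) * (-2 / (exp (2*(c*x+e)) + 1))) \<longlongrightarrow> 0) at_top"
proof -
  have lim: "((\<lambda>x. exp (-(2*(c-u)*x)) * (exp (2*c*x) * (-2 / (exp (2*(c*x+e)) + 1)))) \<longlongrightarrow> 0 * (-2*inverse (exp(2*e)))) at_top"
    by (rule tendsto_mult[OF Ldec E1]) (use assms in auto)
  show ?thesis using lim unfolding expid2 mult_zero_left .
qed
lemma G2: fixes c e u :: real assumes "c > u" "u \<ge> 0" shows "((\<lambda>x. x*exp (2*u*x) * (4*exp (2*(c*x+e)) / (exp (2*(c*x+e)) + 1)^2)) \<longlongrightarrow> 0) at_top"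
proof -
  have lim: "((\<lambda>x. (x*exp (-(2*(c-u)*x))) * (exp (2*c*x) * (4*exp (2*(c*x+e)) / (exp (2*(c*x+e)) + 1)^2))) \<longlongrightarrow> 0 * (4*inverse (exp(2*e)))) at_top"
    by (rule tendsto_mult[OF Ldec2 E2]) (use assms in auto)
  have eq: "(x*exp (-(2*(c-u)*x))) * (exp (2*c*x) * (4*exp (2*(c*x+e)) / (exp (2*(c*x+e)) + 1)^2)) = x*exp (2*u*x) * (4*exp (2*(c*x+e)) / (exp (2*(c*x+e)) + 1)^2)" for x
    by (simp only: mult.assoc[of x] expid2)
  show ?thesis using lim unfolding eq mult_zero_left .
qed

definition Dt :: "real \<Rightarrow> real" where "Dt z = 1 - tanh z ^ 2"

lemma Dt_exp: "Dt z = 4*exp (2*z) / (exp (2*z) + 1)^2"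
  unfolding Dt_def by (rule D_eq)

lemma Dt_minus [simp]: "Dt (-z) = Dt z"
  unfolding Dt_def by simp

lemma Dt_0 [simp]: "Dt 0 = 1"
  unfolding Dt_def by simp

lemma deriv_tanh_Dt: "deriv tanh (x::real) = Dt x"
  unfolding Dt_def by (rule DERIV_imp_deriv) (auto intro!: derivative_eq_intros)

lemma G3: fixes c e u :: real assumes "c > u" "u \<ge> 0" shows "((\<lambda>x. exp (2*u*x) * (4*exp (2*(c*x+e)) / (exp (2*(c*x+e)) + 1)^2)) \<longlongrightarrow> 0) at_top"
proof -
  have lim: "((\<lambda>x. exp (-(2*(c-u)*x)) * (exp (2*c*x) * (4*exp (2*(c*x+e)) / (exp (2*(c*x+e)) + 1)^2))) \<longlongrightarrow> 0 * (4*inverse (exp(2*e)))) at_top"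
    by (rule tendsto_mult[OF Ldec E2]) (use assms in auto)
  show ?thesis using lim unfolding expid2 mult_zero_left .
qed

lemma T1: fixes c e u :: real assumes "c > u" "u \<ge> 0" shows "((\<lambda>x. exp (2*u*x) * (tanh (c*x+e) - 1)) \<longlongrightarrow> 0) at_top"
  unfolding tanh_m1 using G1[OF assms] .
lemma T2: fixes c e u :: real assumes "c > u" "u \<ge> 0" shows "((\<lambda>x. x*exp (2*u*x) * Dt (c*x+e)) \<longlongrightarrow> 0) at_top"
  unfolding Dt_exp using G2[OF assms] .
lemma T3: fixes c e u :: real assumes "c > u" "u \<ge> 0" shows "((\<lambda>x. exp (2*u*x) * Dt (c*x+e)) \<longlongrightarrow> 0) at_top"
  unfolding Dt_exp using G3[OF assms] .
lemma TE1: fixes c e :: real assumes "c > 0" shows "((\<lambda>x. exp (2*c*x) * (tanh (c*x+e) - 1)) \<longlongrightarrow> -2*inverse (exp(2*e))) at_top"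
  unfolding tanh_m1 using E1[OF assms] .
lemma TE2: fixes c e :: real assumes "c > 0" shows "((\<lambda>x. exp (2*c*x) * Dt (c*x+e)) \<longlongrightarrow> 4*inverse (exp(2*e))) at_top"
  unfolding Dt_exp using E2[OF assms] .

lemma Z1: fixes c e :: real assumes "c > 0" shows "((\<lambda>x. tanh (c*x+e)) \<longlongrightarrow> 1) at_top"
proof -
  have "filterlim (\<lambda>x. c*x+e) at_top at_top" using assms by real_asymp
  then show ?thesis by (rule filterlim_compose[OF tanh_real_at_top])
qed
lemma Z2: fixes c e :: real assumes "c > 0" shows "((\<lambda>x. x * Dt (c*x+e)) \<longlongrightarrow> 0) at_top"
  using T2[of 0 c e] assms by simp
lemma Z3: fixes c e :: real assumes "c > 0" shows "((\<lambda>x. Dt (c*x+e)) \<longlongrightarrow> 0) at_top"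
  using T3[of 0 c e] assms by simp

lemma lim_zero: fixes F :: "real \<Rightarrow> real" assumes "(F \<longlongrightarrow> L) at_top" "\<forall>x>0. F x = (0::real)" shows "L = 0"
proof -
  have "eventually (\<lambda>x. F x = 0) (at_top::real filter)"
    using eventually_gt_at_top[of "0::real"] by (rule eventually_mono) (use assms(2) in blast)
  then have "(F \<longlongrightarrow> 0) at_top" by (rule tendsto_eventually)
  then show ?thesis using assms(1) tendsto_unique trivial_limit_at_top_linorder by blast
qed




lemma aux_inv: "(x::real) \<noteq> 0 \<Longrightarrow> al * t * inverse x + b * D + f * D * inverse x = (al * t + (b*x + f) * D) * inverse x"
  by (simp add: distrib_right)

lemma aux2: "(x::real) \<noteq> 0 \<Longrightarrow> E*(al*(T-1) + b*(x*D) + f*D)*inverse x = al*(E*(T-1))*inverse x + b*(E*D) + f*(E*D)*inverse x"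
  by (simp add: field_simps)

lemma lemA:
  fixes K :: "'k set" and c e al b f :: "'k \<Rightarrow> real" and C0 C1 :: real
  assumes fin: "finite K" and pos: "\<forall>k\<in>K. c k > 0" and inj: "inj_on c K"
    and k0: "k0 \<in> K" and mn: "\<forall>k\<in>K. c k0 \<le> c k"
    and h: "\<forall>x. C0 + C1*x + (\<Sum>k\<in>K. al k * tanh (c k*x + e k) + (b k*x + f k) * Dt (c k*x + e k)) = 0"
  shows "C1 = 0 \<and> C0 + sum al K = 0 \<and> b k0 = 0 \<and> al k0 = 2 * f k0"
proof -
  define H where "H x = (\<Sum>k\<in>K. al k * tanh (c k*x + e k) + (b k*x + f k) * Dt (c k*x + e k))" for x
  have hH: "C0 + C1*x + H x = 0" for x using h H_def by simp
  define F1 where "F1 x = C0*inverse x + C1 + (\<Sum>k\<in>K. al k * tanh (c k*x + e k) * inverse x + b k * Dt (c k*x+e k) + f k * Dt (c k*x + e k) * inverse x)" for x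
  have "F1 x = 0" if "x > 0" for x
  proof -
    have s: "(\<Sum>k\<in>K. al k * tanh (c k*x + e k) * inverse x + b k * Dt (c k*x+e k) + f k * Dt (c k*x + e k) * inverse x)
       = (\<Sum>k\<in>K. (al k * tanh (c k*x + e k) + (b k*x + f k) * Dt (c k*x + e k)) * inverse x)"
      apply (rule sum.cong[OF refl])
      apply (rule aux_inv)
      using that by simp
    have "F1 x = C0*inverse x + C1 + H x * inverse x"
      unfolding F1_def H_def s sum_distrib_right ..
    also have "\<dots> = (C0 + C1*x + H x) * inverse x"
      using that by (simp add: distrib_right)
    finally have "F1 x = (C0 + C1*x + H x) * inverse x" .
    then show ?thesis using hH by simp
  qed
  moreover have "(F1 \<longlongrightarrow> C0*0 + C1 + (\<Sum>k\<in>K. al k * 1 * 0 + b k * 0 + f k * 0 * 0)) at_top"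
    unfolding F1_def
    by (intro tendsto_intros Z1 Z3 tendsto_inverse_0_at_top filterlim_ident) (use pos in auto)
  ultimately have C1: "C1 = 0" using lim_zero by fastforce
  define F2 where "F2 x = C0 + (\<Sum>k\<in>K. al k * tanh (c k*x + e k) + b k * (x * Dt (c k*x+e k)) + f k * Dt (c k*x + e k))" for x
  have "F2 x = 0" for x
  proof -
    have "F2 x = C0 + C1*x + H x"
      using C1 by (simp add: F2_def H_def algebra_simps)
    then show ?thesis using hH by simp
  qed
  moreover have "(F2 \<longlongrightarrow> C0 + (\<Sum>k\<in>K. al k * 1 + b k * 0 + f k * 0)) at_top"
    unfolding F2_def
    by (intro tendsto_intros Z1 Z2 Z3) (use pos in auto)
  ultimately have C0: "C0 + sum al K = 0" using lim_zero by fastforce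
  define mu where "mu = c k0"
  have mu0: "mu > 0" using pos k0 mu_def by auto
  have gt: "c k > mu" if "k \<in> K - {k0}" for k
  proof -
    from that have kK: "k \<in> K" "k \<noteq> k0" by auto
    have ne: "c k \<noteq> c k0" using inj_onD[OF inj _ kK(1) k0] kK(2) by blast
    have "c k0 \<le> c k" using mn kK(1) by blast
    then show ?thesis using ne unfolding mu_def by linarith
  qed
  define R where "R k x = al k * (tanh (c k*x+e k) - 1) + b k * (x*Dt (c k*x+e k)) + f k*Dt (c k*x+e k)" for k x
  have sumR: "(\<Sum>k\<in>K. R k x) = 0" for x
  proof -
    have "(\<Sum>k\<in>K. R k x) = (\<Sum>k\<in>K. (al k * tanh (c k*x + e k) + (b k*x + f k) * Dt (c k*x + e k)) - al k)"
      unfolding R_def by (rule sum.cong) (auto simp: algebra_simps)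
    also have "\<dots> = H x - sum al K" unfolding H_def by (simp add: sum_subtractf)
    also have "\<dots> = C0 + C1*x + H x" using C0 C1 by simp
    finally show ?thesis using hH by simp
  qed
  have other: "((\<lambda>x. exp (2*mu*x) * R k x) \<longlongrightarrow> 0) at_top" if "k \<in> K - {k0}" for k
  proof -
    have eq: "exp (2*mu*x) * R k x = al k * (exp (2*mu*x) * (tanh (c k*x+e k) - 1)) + b k * (x*exp (2*mu*x)*Dt (c k*x+e k)) + f k * (exp (2*mu*x) * Dt (c k*x+e k))" for x
      unfolding R_def by (simp add: algebra_simps)
    have "((\<lambda>x. al k * (exp (2*mu*x) * (tanh (c k*x+e k) - 1)) + b k * (x*exp (2*mu*x)*Dt (c k*x+e k)) + f k * (exp (2*mu*x) * Dt (c k*x+e k))) \<longlongrightarrow> al k * 0 + b k * 0 + f k * 0) at_top"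
      using gt[OF that] mu0 by (intro tendsto_intros T1 T2 T3) auto
    then show ?thesis unfolding eq by simp
  qed
  define iE where "iE = inverse (exp (2 * e k0))"
  have iE0: "iE \<noteq> 0" unfolding iE_def by simp
  have split: "(\<Sum>k\<in>K. g k) = g k0 + (\<Sum>k\<in>K-{k0}. g k)" for g :: "'k \<Rightarrow> real"
    using sum.remove[OF fin k0] .
  define F3 where "F3 x = (al k0 * (exp (2*mu*x) * (tanh (c k0*x+e k0) - 1)) * inverse x + b k0 * (exp (2*mu*x)*Dt (c k0*x+e k0)) + f k0 * (exp (2*mu*x) * Dt (c k0*x+e k0)) * inverse x)
      + (\<Sum>k\<in>K-{k0}. exp (2*mu*x) * R k x * inverse x)" for x
  have F3z: "F3 x = 0" if "x > 0" for x
  proof -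
    have c1: "exp (2*mu*x) * (\<Sum>k\<in>K. R k x) * inverse x = (\<Sum>k\<in>K. exp (2*mu*x) * R k x * inverse x)"
      by (simp only: sum_distrib_left sum_distrib_right)
    have c1b: "(\<Sum>k\<in>K. exp (2*mu*x) * R k x * inverse x) = exp (2*mu*x) * R k0 x * inverse x + (\<Sum>k\<in>K-{k0}. exp (2*mu*x) * R k x * inverse x)"
      by (rule split)
    have c2: "exp (2*mu*x) * R k0 x * inverse x = al k0 * (exp (2*mu*x) * (tanh (c k0*x+e k0) - 1)) * inverse x + b k0 * (exp (2*mu*x)*Dt (c k0*x+e k0)) + f k0 * (exp (2*mu*x) * Dt (c k0*x+e k0)) * inverse x"
      unfolding R_def by (rule aux2) (use that in auto)
    have "F3 x = exp (2*mu*x) * (\<Sum>k\<in>K. R k x) * inverse x"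
      by (simp only: c1 c1b c2 F3_def)
    then show ?thesis using sumR by simp
  qed
  have TE1': "((\<lambda>x. exp (2*mu*x) * (tanh (c k0*x+e k0) - 1)) \<longlongrightarrow> -2*iE) at_top"
    unfolding mu_def iE_def by (rule TE1) (use pos k0 in auto)
  have TE2': "((\<lambda>x. exp (2*mu*x) * Dt (c k0*x+e k0)) \<longlongrightarrow> 4*iE) at_top"
    unfolding mu_def iE_def by (rule TE2) (use pos k0 in auto)
  have inv0: "((\<lambda>x::real. inverse x) \<longlongrightarrow> 0) at_top"
    by (rule tendsto_inverse_0_at_top[OF filterlim_ident])
  have lo1: "((\<lambda>x. \<Sum>k\<in>K-{k0}. exp (2*mu*x) * R k x * inverse x) \<longlongrightarrow> 0) at_top"
  proof (rule tendsto_null_sum)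
    fix k assume "k \<in> K - {k0}"
    from tendsto_mult[OF other[OF this] inv0] show "((\<lambda>x. exp (2*mu*x) * R k x * inverse x) \<longlongrightarrow> 0) at_top" by simp
  qed
  have lo2: "((\<lambda>x. \<Sum>k\<in>K-{k0}. exp (2*mu*x) * R k x) \<longlongrightarrow> 0) at_top"
    by (rule tendsto_null_sum) (rule other)
  have la: "((\<lambda>x. al k0 * (exp (2*mu*x) * (tanh (c k0*x+e k0) - 1)) * inverse x) \<longlongrightarrow> al k0 * (-2*iE) * 0) at_top"
    by (rule tendsto_mult[OF tendsto_mult[OF tendsto_const TE1'] inv0])
  have lb: "((\<lambda>x. b k0 * (exp (2*mu*x)*Dt (c k0*x+e k0))) \<longlongrightarrow> b k0 * (4*iE)) at_top"
    by (rule tendsto_mult[OF tendsto_const TE2'])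
  have lf: "((\<lambda>x. f k0 * (exp (2*mu*x)*Dt (c k0*x+e k0)) * inverse x) \<longlongrightarrow> f k0 * (4*iE) * 0) at_top"
    by (rule tendsto_mult[OF tendsto_mult[OF tendsto_const TE2'] inv0])
  have "(F3 \<longlongrightarrow> (al k0 * (-2*iE) * 0 + b k0 * (4*iE) + f k0 * (4*iE) * 0) + 0) at_top"
    unfolding F3_def by (rule tendsto_add[OF tendsto_add[OF tendsto_add[OF la lb] lf] lo1])
  then have "(al k0 * (-2*iE) * 0 + b k0 * (4*iE) + f k0 * (4*iE) * 0) + 0 = 0"
    by (rule lim_zero) (use F3z in blast)
  then have b0: "b k0 = 0" using iE0 by simp
  define F4 where "F4 x = (al k0 * (exp (2*mu*x) * (tanh (c k0*x+e k0) - 1)) + f k0 * (exp (2*mu*x) * Dt (c k0*x+e k0)))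
      + (\<Sum>k\<in>K-{k0}. exp (2*mu*x) * R k x)" for x
  have F4z: "F4 x = 0" for x
  proof -
    have c1: "exp (2*mu*x) * (\<Sum>k\<in>K. R k x) = (\<Sum>k\<in>K. exp (2*mu*x) * R k x)"
      by (simp only: sum_distrib_left)
    have c1b: "(\<Sum>k\<in>K. exp (2*mu*x) * R k x) = exp (2*mu*x) * R k0 x + (\<Sum>k\<in>K-{k0}. exp (2*mu*x) * R k x)"
      by (rule split)
    have c2: "exp (2*mu*x) * R k0 x = al k0 * (exp (2*mu*x) * (tanh (c k0*x+e k0) - 1)) + f k0 * (exp (2*mu*x) * Dt (c k0*x+e k0))"
      unfolding R_def using b0 by (simp add: algebra_simps)
    have "F4 x = exp (2*mu*x) * (\<Sum>k\<in>K. R k x)"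
      by (simp only: c1 c1b c2 F4_def)
    then show ?thesis using sumR by simp
  qed
  have la2: "((\<lambda>x. al k0 * (exp (2*mu*x) * (tanh (c k0*x+e k0) - 1))) \<longlongrightarrow> al k0 * (-2*iE)) at_top"
    by (rule tendsto_mult[OF tendsto_const TE1'])
  have lf2: "((\<lambda>x. f k0 * (exp (2*mu*x)*Dt (c k0*x+e k0))) \<longlongrightarrow> f k0 * (4*iE)) at_top"
    by (rule tendsto_mult[OF tendsto_const TE2'])
  have "(F4 \<longlongrightarrow> (al k0 * (-2*iE) + f k0 * (4*iE)) + 0) at_top"
    unfolding F4_def by (rule tendsto_add[OF tendsto_add[OF la2 lf2] lo2])
  then have "(al k0 * (-2*iE) + f k0 * (4*iE)) + 0 = 0"
    by (rule lim_zero) (use F4z in blast)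
  then have "(2 * f k0 - al k0) * (2*iE) = 0" by (simp add: algebra_simps)
  then have "al k0 = 2 * f k0" using iE0 by simp
  then show ?thesis using C0 C1 b0 by simp
qed




lemma tanh_refl: "tanh (c*(-x)+e) = - tanh (c*x + -e::real)"
proof -
  have "c*(-x)+e = -(c*x + -e)" by simp
  then show ?thesis by (simp only: tanh_minus)
qed

lemma Dt_refl: "Dt (c*(-x)+e) = Dt (c*x + -e::real)"
proof -
  have "c*(-x)+e = -(c*x + -e)" by simp
  then show ?thesis by (simp only: Dt_minus)
qed

lemma lemB:
  fixes K :: "'k set" and c e al b f :: "'k \<Rightarrow> real" and C0 C1 :: real
  shows "finite K \<Longrightarrow> (\<forall>k\<in>K. c k > 0) \<Longrightarrow> inj_on c K \<Longrightarrow>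
    (\<forall>x. C0 + C1*x + (\<Sum>k\<in>K. al k * tanh (c k*x + e k) + (b k*x + f k) * Dt (c k*x + e k)) = 0) \<Longrightarrow>
    C0 = 0 \<and> C1 = 0 \<and> (\<forall>k\<in>K. al k = 0 \<and> b k = 0 \<and> f k = 0)"
proof (induction K rule: finite_psubset_induct)
  case (psubset K)
  note fin = psubset.hyps(1) and pos = psubset.prems(1) and inj = psubset.prems(2) and h = psubset.prems(3)
  show ?case
  proof (cases "K = {}")
    case True
    then have "C0 + C1 * x = 0" for x using h by auto
    from this[of 0] this[of 1] show ?thesis using True by simp
  next
    case False
    have "Min (c ` K) \<in> c ` K" using fin False by (intro Min_in) auto
    then obtain k0 where k0: "k0 \<in> K" "c k0 = Min (c ` K)" by auto
    have mn: "\<forall>k\<in>K. c k0 \<le> c k" using k0 fin by auto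
    have A: "C1 = 0 \<and> C0 + sum al K = 0 \<and> b k0 = 0 \<and> al k0 = 2 * f k0"
      by (rule lemA[OF fin pos inj k0(1) mn h])
    have h': "\<forall>x. C0 + (-C1)*x + (\<Sum>k\<in>K. (-al k) * tanh (c k*x + (-e k)) + ((-b k)*x + f k) * Dt (c k*x + (-e k))) = 0"
    proof
      fix x
      have "C0 + C1*(-x) + (\<Sum>k\<in>K. al k * tanh (c k*(-x) + e k) + (b k*(-x) + f k) * Dt (c k*(-x) + e k)) = 0"
        using h by blast
      moreover have "(\<Sum>k\<in>K. al k * tanh (c k*(-x) + e k) + (b k*(-x) + f k) * Dt (c k*(-x) + e k))
          = (\<Sum>k\<in>K. (-al k) * tanh (c k*x + (-e k)) + ((-b k)*x + f k) * Dt (c k*x + (-e k)))"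
        by (rule sum.cong[OF refl]) (simp only: tanh_refl Dt_refl, simp)
      ultimately show "C0 + (-C1)*x + (\<Sum>k\<in>K. (-al k) * tanh (c k*x + (-e k)) + ((-b k)*x + f k) * Dt (c k*x + (-e k))) = 0"
        by simp
    qed
    have B: "-C1 = 0 \<and> C0 + sum (\<lambda>k. -al k) K = 0 \<and> -b k0 = 0 \<and> -al k0 = 2 * f k0"
      by (rule lemA[OF fin pos inj k0(1) mn h'])
    have sal: "sum (\<lambda>k. -al k) K = - sum al K" by (simp add: sum_negf)
    have z0: "al k0 = 0" "f k0 = 0" "b k0 = 0" "C0 = 0" "C1 = 0" using A B sal by auto
    define K' where "K' = K - {k0}"
    have sub: "K' \<subset> K" using k0 K'_def by auto
    have h2: "\<forall>x. C0 + C1*x + (\<Sum>k\<in>K'. al k * tanh (c k*x + e k) + (b k*x + f k) * Dt (c k*x + e k)) = 0"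
    proof
      fix x
      have "C0 + C1*x + (\<Sum>k\<in>K. al k * tanh (c k*x + e k) + (b k*x + f k) * Dt (c k*x + e k)) = 0"
        using h by blast
      then show "C0 + C1*x + (\<Sum>k\<in>K'. al k * tanh (c k*x + e k) + (b k*x + f k) * Dt (c k*x + e k)) = 0"
        unfolding K'_def sum.remove[OF fin k0(1)] using z0 by simp
    qed
    have IH: "C0 = 0 \<and> C1 = 0 \<and> (\<forall>k\<in>K'. al k = 0 \<and> b k = 0 \<and> f k = 0)"
      using psubset.IH[OF sub] pos inj h2 sub by (auto intro: inj_on_subset)
    show ?thesis using IH z0 K'_def by auto
  qed
qed




lemma lemC:
  fixes R :: "(real^'n) set" and v0 :: "real^'n" and al :: "real^'n \<Rightarrow> real"
    and be :: "real^'n \<Rightarrow> real^'n" and ga :: "real^'n"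
  assumes fin: "finite R" and pos: "\<forall>u\<in>R. u \<bullet> v0 > 0" and inj: "inj_on (\<lambda>u. u \<bullet> v0) R"
    and h: "\<forall>x. (\<Sum>u\<in>R. al u * tanh (u \<bullet> x) + Dt (u \<bullet> x) * (be u \<bullet> x)) + ga \<bullet> x = 0"
  shows "ga = 0 \<and> (\<forall>u\<in>R. al u = 0 \<and> be u = 0)"
proof -
  have main: "ga \<bullet> y = 0 \<and> (\<forall>u\<in>R. al u = 0 \<and> be u \<bullet> y = 0)" for y
  proof -
    have hs: "\<forall>r. ga \<bullet> y + (ga \<bullet> v0)* r + (\<Sum>u\<in>R. al u * tanh ((u \<bullet> v0)* r + u \<bullet> y) + ((be u \<bullet> v0)* r + be u \<bullet> y) * Dt ((u \<bullet> v0)* r + u \<bullet> y)) = 0"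
    proof
      fix r
      have e1: "u \<bullet> (r *\<^sub>R v0 + y) = (u \<bullet> v0)* r + u \<bullet> y" for u :: "real^'n"
        by (simp add: inner_add_right)
      have "(\<Sum>u\<in>R. al u * tanh (u \<bullet> (r *\<^sub>R v0 + y)) + Dt (u \<bullet> (r *\<^sub>R v0 + y)) * (be u \<bullet> (r *\<^sub>R v0 + y))) + ga \<bullet> (r *\<^sub>R v0 + y) = 0"
        using h by blast
      then show "ga \<bullet> y + (ga \<bullet> v0)* r + (\<Sum>u\<in>R. al u * tanh ((u \<bullet> v0)* r + u \<bullet> y) + ((be u \<bullet> v0)* r + be u \<bullet> y) * Dt ((u \<bullet> v0)* r + u \<bullet> y)) = 0"
        unfolding e1 by (simp add: algebra_simps)
    qed
    show ?thesis using lemB[OF fin _ _ hs] pos inj by auto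
  qed
  have "ga \<bullet> ga = 0" using main by blast
  then have "ga = 0" by simp
  moreover have "al u = 0 \<and> be u = 0" if "u \<in> R" for u
  proof -
    have 1: "be u \<bullet> be u = 0" using main[of "be u"] that by blast
    have "al u = 0" using main[of 0] that by blast
    then show ?thesis using 1 by simp
  qed
  ultimately show ?thesis by blast
qed




lemma lemD:
  fixes P :: "(real^'n) set"
  assumes fin: "finite P"
  obtains v0 where "\<forall>u\<in>P. \<forall>u'\<in>P. u \<noteq> u' \<longrightarrow> u \<bullet> v0 \<noteq> u' \<bullet> v0"
proof -
  define F where "F = (\<lambda>(u,u'). {v::real^'n. (u - u') \<bullet> v = 0}) ` {(u,u'). u \<in> P \<and> u' \<in> P \<and> u \<noteq> u'}"
  have "finite {(u,u'). u \<in> P \<and> u' \<in> P \<and> u \<noteq> u'}"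
    by (rule finite_subset[of _ "P \<times> P"]) (use fin in auto)
  then have fF: "finite F" unfolding F_def by simp
  have nF: "\<forall>T\<in>F. negligible T"
    unfolding F_def by (auto intro!: negligible_hyperplane)
  have "negligible (\<Union>F)" using fF nF by (intro negligible_Union) auto
  then have "\<Union>F \<noteq> UNIV" using non_negligible_UNIV by metis
  then obtain v where v: "v \<notin> \<Union>F" by blast
  have "\<forall>u\<in>P. \<forall>u'\<in>P. u \<noteq> u' \<longrightarrow> u \<bullet> v \<noteq> u' \<bullet> v"
  proof (intro ballI impI)
    fix u u' assume "u \<in> P" "u' \<in> P" "u \<noteq> u'"
    then have "{v::real^'n. (u - u') \<bullet> v = 0} \<in> F" unfolding F_def by auto
    then have "(u - u') \<bullet> v \<noteq> 0" using v by blast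
    then show "u \<bullet> v \<noteq> u' \<bullet> v" by (simp add: inner_diff_left)
  qed
  then show ?thesis using that by blast
qed

lemma card_sym:
  fixes S :: "(real^'n) set"
  assumes fin: "finite S" and sym: "\<forall>u\<in>S. -u \<in> S" and nz: "\<forall>u\<in>S. u \<bullet> v0 \<noteq> 0"
  shows "card S = 2 * card {u\<in>S. u \<bullet> v0 > 0}"
proof -
  define R where "R = {u\<in>S. u \<bullet> v0 > 0}"
  have S: "S = R \<union> uminus ` R"
  proof
    show "S \<subseteq> R \<union> uminus ` R"
    proof
      fix u assume u: "u \<in> S"
      show "u \<in> R \<union> uminus ` R"
      proof (cases "u \<bullet> v0 > 0")
        case True then show ?thesis using u R_def by auto
      next
        case False
        then have "(-u) \<bullet> v0 > 0" using nz u by (simp add: inner_minus_left) (meson linorder_neqE_linordered_idom)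
        then have "-u \<in> R" using sym u R_def by auto
        then have "- (-u) \<in> uminus ` R" by blast
        then show ?thesis by simp
      qed
    qed
    show "R \<union> uminus ` R \<subseteq> S" using sym R_def by auto
  qed
  have disj: "R \<inter> uminus ` R = {}" unfolding R_def by (auto simp: inner_minus_left)
  have finR: "finite R" using fin R_def by simp
  have "card S = card R + card (uminus ` R)"
    by (subst S, rule card_Un_disjoint) (use finR disj in auto)
  also have "card (uminus ` R) = card R" by (rule card_image) (simp add: inj_on_def)
  finally show ?thesis unfolding R_def by simp
qed

lemma sum_fun_apply': "(\<Sum>v\<in>A. f v) x = (\<Sum>v\<in>A. f v x)"
  by (induction A rule: infinite_finite_induct) auto




definition phi :: "(real^'n) + (((real^'n) \<times> 'n) + 'n) \<Rightarrow> real^'n \<Rightarrow> real" where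
  "phi i = (case i of Inl u \<Rightarrow> (\<lambda>x. tanh (u \<bullet> x)) | Inr (Inl (u,t)) \<Rightarrow> (\<lambda>x. Dt (u \<bullet> x) * x$t) | Inr (Inr t) \<Rightarrow> (\<lambda>x. x$t))"

definition Iset :: "(real^'n) set \<Rightarrow> (real^'n) set \<Rightarrow> bool \<Rightarrow> ((real^'n) + (((real^'n) \<times> 'n) + 'n)) set" where
  "Iset R Ra z = Inl ` R \<union> (Inr \<circ> Inl) ` (Ra \<times> UNIV) \<union> (if z then (Inr \<circ> Inr) ` UNIV else {})"

lemma finite_Iset: "finite R \<Longrightarrow> finite Ra \<Longrightarrow> finite (Iset R Ra z)"
  unfolding Iset_def by auto

lemma card_Iset: "finite R \<Longrightarrow> finite Ra \<Longrightarrow> card (Iset (R::(real^'n) set) Ra z) = card R + card Ra * CARD('n) + (if z then CARD('n) else 0)"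
proof -
  assume fR: "finite R" and fRa: "finite Ra"
  have d1: "Inl ` R \<inter> (Inr \<circ> Inl) ` (Ra \<times> (UNIV::'n set)) = {}" by auto
  have d2: "(Inl ` R \<union> (Inr \<circ> Inl) ` (Ra \<times> (UNIV::'n set))) \<inter> (if z then (Inr \<circ> Inr) ` (UNIV::'n set) else {}) = {}" by auto
  have c1: "card (Inl ` R \<union> (Inr \<circ> Inl) ` (Ra \<times> (UNIV::'n set))) = card R + card Ra * CARD('n)"
    using fR fRa d1 by (subst card_Un_disjoint) (auto simp: card_image card_cartesian_product inj_on_def)
  have c2: "card (if z then (Inr \<circ> Inr) ` (UNIV::'n set) else {}) = (if z then CARD('n) else 0)"
    by (auto simp: card_image inj_on_def)
  show ?thesis unfolding Iset_def
    using fR fRa d2 c1 c2 by (subst card_Un_disjoint) auto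
qed

lemma sum_Iset:
  fixes g :: "(real^'n) + (((real^'n) \<times> 'n) + 'n) \<Rightarrow> real"
  assumes fR: "finite R" and fRa: "finite Ra"
  shows "(\<Sum>i\<in>Iset R Ra z. g i) = (\<Sum>u\<in>R. g (Inl u)) + (\<Sum>p\<in>Ra \<times> UNIV. g (Inr (Inl p))) + (if z then (\<Sum>t\<in>UNIV. g (Inr (Inr t))) else 0)"
proof -
  have d1: "Inl ` R \<inter> (Inr \<circ> Inl) ` (Ra \<times> (UNIV::'n set)) = {}" by auto
  have d2: "(Inl ` R \<union> (Inr \<circ> Inl) ` (Ra \<times> (UNIV::'n set))) \<inter> (if z then (Inr \<circ> Inr) ` (UNIV::'n set) else {}) = {}" by auto
  have s1: "(\<Sum>i\<in>Inl ` R \<union> (Inr \<circ> Inl) ` (Ra \<times> (UNIV::'n set)). g i) = (\<Sum>u\<in>R. g (Inl u)) + (\<Sum>p\<in>Ra \<times> UNIV. g (Inr (Inl p)))"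
    using fR fRa d1 by (subst sum.union_disjoint) (auto simp: sum.reindex inj_on_def)
  have s2: "(\<Sum>i\<in>(if z then (Inr \<circ> Inr) ` (UNIV::'n set) else {}). g i) = (if z then (\<Sum>t\<in>UNIV. g (Inr (Inr t))) else 0)"
    by (auto simp: sum.reindex inj_on_def)
  show ?thesis unfolding Iset_def
    using fR fRa d2 s1 s2 by (subst sum.union_disjoint) auto
qed

lemma lemE:
  fixes R Ra :: "(real^'n) set" and v0 :: "real^'n" and z :: bool
    and c :: "(real^'n) + (((real^'n) \<times> 'n) + 'n) \<Rightarrow> real"
  assumes fin: "finite R" and sub: "Ra \<subseteq> R" and pos: "\<forall>u\<in>R. u \<bullet> v0 > 0" and inj: "inj_on (\<lambda>u. u \<bullet> v0) R"
    and h: "\<forall>x. (\<Sum>i\<in>Iset R Ra z. c i * phi i x) = 0"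
  shows "\<forall>i\<in>Iset R Ra z. c i = 0"
proof -
  have finRa: "finite Ra" using fin sub finite_subset by blast
  define al where "al u = c (Inl u)" for u
  define be where "be u = (\<chi> t. if u \<in> Ra then c (Inr (Inl (u,t))) else 0)" for u
  define ga where "ga = (\<chi> t. if z then c (Inr (Inr t)) else 0)"
  have h2: "\<forall>x. (\<Sum>u\<in>R. al u * tanh (u \<bullet> x) + Dt (u \<bullet> x) * (be u \<bullet> x)) + ga \<bullet> x = 0"
  proof
    fix x :: "real^'n"
    have e1: "(\<Sum>p\<in>Ra \<times> UNIV. c (Inr (Inl p)) * phi (Inr (Inl p)) x) = (\<Sum>u\<in>R. Dt (u \<bullet> x) * (be u \<bullet> x))"
    proof -
      have "(\<Sum>p\<in>Ra \<times> UNIV. c (Inr (Inl p)) * phi (Inr (Inl p)) x) = (\<Sum>u\<in>Ra. \<Sum>t\<in>UNIV. c (Inr (Inl (u,t))) * (Dt (u \<bullet> x) * x$t))"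
        by (simp add: sum.cartesian_product phi_def case_prod_unfold)
      also have "\<dots> = (\<Sum>u\<in>Ra. Dt (u \<bullet> x) * (be u \<bullet> x))"
        by (rule sum.cong[OF refl]) (simp add: be_def inner_vec_def sum_distrib_left algebra_simps)
      also have "\<dots> = (\<Sum>u\<in>R. Dt (u \<bullet> x) * (be u \<bullet> x))"
        by (rule sum.mono_neutral_left) (use fin sub in \<open>auto simp: be_def inner_vec_def\<close>)
      finally show ?thesis .
    qed
    have e2: "(if z then (\<Sum>t\<in>UNIV. c (Inr (Inr t)) * phi (Inr (Inr t)) x) else 0) = ga \<bullet> x"
      by (simp add: ga_def inner_vec_def phi_def)
    have e0: "(\<Sum>u\<in>R. c (Inl u) * phi (Inl u) x) = (\<Sum>u\<in>R. al u * tanh (u \<bullet> x))"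
      by (simp add: al_def phi_def)
    have "(\<Sum>i\<in>Iset R Ra z. c i * phi i x) = 0" using h by blast
    then have "(\<Sum>u\<in>R. al u * tanh (u \<bullet> x)) + (\<Sum>u\<in>R. Dt (u \<bullet> x) * (be u \<bullet> x)) + ga \<bullet> x = 0"
      unfolding sum_Iset[OF fin finRa] e0 e1 e2 .
    then show "(\<Sum>u\<in>R. al u * tanh (u \<bullet> x) + Dt (u \<bullet> x) * (be u \<bullet> x)) + ga \<bullet> x = 0"
      by (simp add: sum.distrib)
  qed
  have C: "ga = 0 \<and> (\<forall>u\<in>R. al u = 0 \<and> be u = 0)" by (rule lemC[OF fin pos inj h2])
  show ?thesis
  proof
    fix i assume i: "i \<in> Iset R Ra z"
    show "c i = 0"
    proof (cases i)
      case (Inl u)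
      then show ?thesis using i C al_def unfolding Iset_def by (auto split: if_splits)
    next
      case (Inr j)
      show ?thesis
      proof (cases j)
        case (Inl p)
        obtain u t where p: "p = (u,t)" by (cases p)
        have uRa: "u \<in> Ra" using i Inr Inl p unfolding Iset_def by (auto split: if_splits)
        then have "be u $ t = 0" using C sub by auto
        then show ?thesis using uRa Inr Inl p be_def by simp
      next
        case (Inr t)
        have z using i \<open>i = Inr j\<close> Inr unfolding Iset_def by (auto split: if_splits)
        have "ga $ t = 0" using C by simp
        then show ?thesis using \<open>z\<close> \<open>i = Inr j\<close> Inr ga_def by simp
      qed
    qed
  qed
qed




lemma module_fscale: "module (fscale :: real \<Rightarrow> ('a \<Rightarrow> real) \<Rightarrow> _)"
  using vector_space_fscale module_iff_vector_space by blast

lemma indep_phi: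
  fixes R Ra :: "(real^'n) set" and v0 :: "real^'n" and z :: bool
  assumes fin: "finite R" and sub: "Ra \<subseteq> R" and pos: "\<forall>u\<in>R. u \<bullet> v0 > 0" and inj: "inj_on (\<lambda>u. u \<bullet> v0) R"
  shows "inj_on phi (Iset R Ra z)" and "\<not> module.dependent fscale (phi ` Iset R Ra z)"
proof -
  define I where "I = Iset R Ra z"
  have finRa: "finite Ra" using fin sub finite_subset by blast
  have finI: "finite I" unfolding I_def using fin finRa by (rule finite_Iset)
  have E: "\<forall>i\<in>I. c i = 0" if "\<forall>x. (\<Sum>i\<in>I. c i * phi i x) = 0" for c
    unfolding I_def by (rule lemE[OF fin sub pos inj]) (use that I_def in simp)
  show injI: "inj_on phi (Iset R Ra z)" unfolding I_def[symmetric]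
  proof (rule inj_onI, rule ccontr)
    fix i j assume ij: "i \<in> I" "j \<in> I" "phi i = phi j" "i \<noteq> j"
    define c where "c k = (if k = i then 1 else if k = j then -1 else (0::real))" for k
    have "(\<Sum>k\<in>I. c k * phi k x) = 0" for x
    proof -
      have "(\<Sum>k\<in>I. c k * phi k x) = (\<Sum>k\<in>I. (if k = i then phi k x else 0) + (if k = j then - phi k x else 0))"
        by (rule sum.cong) (use ij in \<open>auto simp: c_def\<close>)
      also have "\<dots> = phi i x - phi j x" using ij finI by (simp add: sum.distrib)
      finally show ?thesis using ij by simp
    qed
    then have "c i = 0" using E ij by blast
    then show False unfolding c_def by simp
  qed
  show "\<not> module.dependent fscale (phi ` Iset R Ra z)" unfolding I_def[symmetric]
  proof
    assume "module.dependent fscale (phi ` I)"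
    then obtain u where u: "\<exists>v\<in>phi ` I. u v \<noteq> 0" "(\<Sum>v\<in>phi ` I. fscale (u v) v) = 0"
      using module.dependent_finite[OF module_fscale] finI by blast
    have "(\<Sum>v\<in>phi ` I. fscale (u v) v) = (\<Sum>i\<in>I. fscale (u (phi i)) (phi i))"
      using injI unfolding I_def[symmetric] by (simp add: sum.reindex)
    then have "\<forall>x. (\<Sum>i\<in>I. u (phi i) * phi i x) = 0"
      using u(2) by (auto simp: fun_eq_iff sum_fun_apply' fscale_def)
    then have "\<forall>i\<in>I. u (phi i) = 0" by (rule E)
    then show False using u(1) by blast
  qed
qed




lemma main_aux:
  fixes m :: nat
    and w :: "nat \<Rightarrow> real ^ 'n"
    and a :: "nat \<Rightarrow> real"
  shows "real (fun_dim (fun_span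
            ({(\<lambda>x::real ^ 'n. tanh (w i \<bullet> x)) | i. i < m} \<union>
             {(\<lambda>x::real ^ 'n. a i * deriv tanh (w i \<bullet> x) * x $ t) | i t. i < m})))
       = real (card {v. \<exists>i<m. w i \<noteq> 0 \<and> (v = w i \<or> v = - w i)}) / 2
         + (real (card {v. \<exists>i<m. w i \<noteq> 0 \<and> a i \<noteq> 0 \<and> (v = w i \<or> v = - w i)}) / 2
            + real (card {v. \<exists>i<m. w i = 0 \<and> a i \<noteq> 0 \<and> v = w i})) * real CARD('n)"
    (is "real (fun_dim (fun_span ?S)) = real (card ?V) / 2 + (real (card ?Va) / 2 + real (card ?Z)) * _")
proof -
  have MS: "module fscale" by (rule module_fscale)
  have finV: "finite ?V"
    by (rule finite_subset[of _ "w ` {..<m} \<union> (\<lambda>i. - w i) ` {..<m}"]) auto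
  have VaV: "?Va \<subseteq> ?V" by blast
  have finVa: "finite ?Va" using finV VaV finite_subset by blast
  define z where "z = (\<exists>i<m. w i = 0 \<and> a i \<noteq> 0)"
  have cardZ: "card ?Z = (if z then 1 else 0)"
  proof -
    have "?Z = (if z then {0} else {})" unfolding z_def by auto
    then show ?thesis by simp
  qed
  obtain v0 where v0: "\<forall>u\<in>insert 0 ?V. \<forall>u'\<in>insert 0 ?V. u \<noteq> u' \<longrightarrow> u \<bullet> v0 \<noteq> u' \<bullet> v0"
    using lemD[of "insert 0 ?V"] finV by blast
  have nzV: "\<forall>u\<in>?V. u \<bullet> v0 \<noteq> 0"
  proof
    fix u assume u: "u \<in> ?V"
    then have "u \<noteq> 0" by auto
    then show "u \<bullet> v0 \<noteq> 0" using v0 u by force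
  qed
  define R where "R = {u\<in>?V. u \<bullet> v0 > 0}"
  define Ra where "Ra = {u\<in>?Va. u \<bullet> v0 > 0}"
  have RaR: "Ra \<subseteq> R" unfolding R_def Ra_def by blast
  have finR: "finite R" unfolding R_def using finV by simp
  have finRa: "finite Ra" using finR RaR finite_subset by blast
  have posR: "\<forall>u\<in>R. u \<bullet> v0 > 0" unfolding R_def by blast
  have injR: "inj_on (\<lambda>u. u \<bullet> v0) R"
    by (rule inj_onI) (use v0 in \<open>auto simp: R_def\<close>)
  have cV: "card ?V = 2 * card R" unfolding R_def
    by (rule card_sym[OF finV]) (use nzV in \<open>auto\<close>)
  have cVa: "card ?Va = 2 * card Ra" unfolding Ra_def
    by (rule card_sym[OF finVa]) (use nzV VaV in \<open>auto\<close>)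
  define B where "B = phi ` Iset R Ra z"
  have inj: "inj_on phi (Iset R Ra z)" and ind: "\<not> module.dependent fscale B"
    unfolding B_def using indep_phi[OF finR RaR posR injR] by blast+
  have cardB: "card B = card R + card Ra * CARD('n) + (if z then CARD('n) else 0)"
    unfolding B_def using card_image[OF inj] card_Iset[OF finR finRa] by simp
  have dt: "deriv tanh = Dt" using deriv_tanh_Dt by (rule ext)
  have tz: "(\<lambda>x::real^'n. tanh (0 \<bullet> x)) = 0" by (simp add: fun_eq_iff)
  have SB: "?S \<subseteq> module.span fscale B"
  proof
    fix g assume "g \<in> ?S"
    then consider (A) i where "i < m" "g = (\<lambda>x. tanh (w i \<bullet> x))"
      | (D) i t where "i < m" "g = (\<lambda>x. a i * deriv tanh (w i \<bullet> x) * x $ t)" by blast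
    then show "g \<in> module.span fscale B"
    proof cases
      case (A i)
      show ?thesis
      proof (cases "w i = 0")
        case True
        then show ?thesis using A tz module.span_zero[OF MS] by (simp add: zero_fun_def)
      next
        case False
        then have wV: "w i \<in> ?V" "- w i \<in> ?V" using A by blast+
        show ?thesis
        proof (cases "w i \<bullet> v0 > 0")
          case True
          then have "Inl (w i) \<in> Iset R Ra z" using wV unfolding R_def Iset_def by auto
          then have "phi (Inl (w i)) \<in> B" unfolding B_def by blast
          moreover have "phi (Inl (w i)) = g" using A by (simp add: phi_def)
          ultimately show ?thesis using module.span_base[OF MS] by metis
        next
          case False
          then have "(- w i) \<bullet> v0 > 0" using nzV wV by (auto simp: inner_minus_left)
          then have "Inl (- w i) \<in> Iset R Ra z" using wV unfolding R_def Iset_def by auto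
          then have "phi (Inl (- w i)) \<in> B" unfolding B_def by blast
          then have "fscale (-1) (phi (Inl (- w i))) \<in> module.span fscale B"
            using module.span_scale[OF MS module.span_base[OF MS]] by blast
          moreover have "fscale (-1) (phi (Inl (- w i))) = g" using A
            by (simp add: phi_def fscale_def fun_eq_iff inner_minus_left)
          ultimately show ?thesis by simp
        qed
      qed
    next
      case (D i t)
      show ?thesis
      proof (cases "a i = 0")
        case True
        then show ?thesis using D module.span_zero[OF MS] by (simp add: zero_fun_def)
      next
        case anz: False
        show ?thesis
        proof (cases "w i = 0")
          case True
          then have z unfolding z_def using D anz by blast
          then have "Inr (Inr t) \<in> Iset R Ra z" unfolding Iset_def by auto
          then have "phi (Inr (Inr t)) \<in> B" unfolding B_def by blast
          then have "fscale (a i) (phi (Inr (Inr t))) \<in> module.span fscale B"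
            using module.span_scale[OF MS module.span_base[OF MS]] by blast
          moreover have "fscale (a i) (phi (Inr (Inr t))) = g" using D True
            by (simp add: phi_def fscale_def fun_eq_iff dt)
          ultimately show ?thesis by simp
        next
          case False
          then have wV: "w i \<in> ?Va" "- w i \<in> ?Va" using D anz by blast+
          have "\<exists>u. u \<in> Ra \<and> Dt \<circ> (\<lambda>x. u \<bullet> x) = Dt \<circ> (\<lambda>x. w i \<bullet> x)"
          proof (cases "w i \<bullet> v0 > 0")
            case True then show ?thesis using wV unfolding Ra_def by auto
          next
            case False
            then have "(- w i) \<bullet> v0 > 0" using nzV wV VaV by (auto simp: inner_minus_left)
            then show ?thesis using wV unfolding Ra_def
              by (intro exI[of _ "- w i"]) (auto simp: inner_minus_left fun_eq_iff)
          qed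
          then obtain u where u: "u \<in> Ra" "\<And>x. Dt (u \<bullet> x) = Dt (w i \<bullet> x)"
            by (auto simp: fun_eq_iff)
          then have "Inr (Inl (u, t)) \<in> Iset R Ra z" unfolding Iset_def by auto
          then have "phi (Inr (Inl (u, t))) \<in> B" unfolding B_def by blast
          then have "fscale (a i) (phi (Inr (Inl (u, t)))) \<in> module.span fscale B"
            using module.span_scale[OF MS module.span_base[OF MS]] by blast
          moreover have "fscale (a i) (phi (Inr (Inl (u, t)))) = g" using D u(2)
            by (simp add: phi_def fscale_def fun_eq_iff dt)
          ultimately show ?thesis by simp
        qed
      qed
    qed
  qed
  have BS: "B \<subseteq> module.span fscale ?S"
  proof
    fix g assume "g \<in> B"
    then obtain j where j: "j \<in> Iset R Ra z" "g = phi j" unfolding B_def by blast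
    show "g \<in> module.span fscale ?S"
    proof (cases j)
      case (Inl u)
      then have "u \<in> R" using j unfolding Iset_def by (auto split: if_splits)
      then obtain i where i: "i < m" "u = w i \<or> u = - w i" unfolding R_def by blast
      have mem: "(\<lambda>x. tanh (w i \<bullet> x)) \<in> ?S" using i by blast
      show ?thesis
      proof (cases "u = w i")
        case True
        then have "g = (\<lambda>x. tanh (w i \<bullet> x))" using j Inl by (simp add: phi_def)
        then show ?thesis using module.span_base[OF MS mem] by simp
      next
        case False
        then have "u = - w i" using i by blast
        then have "g = fscale (-1) (\<lambda>x. tanh (w i \<bullet> x))"
          using j Inl by (simp add: phi_def fscale_def fun_eq_iff inner_minus_left)
        then show ?thesis using module.span_scale[OF MS module.span_base[OF MS mem]] by simp
      qed
    next
      case (Inr j')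
      show ?thesis
      proof (cases j')
        case (Inl p)
        obtain u t where p: "p = (u, t)" by (cases p)
        have "u \<in> Ra" using j Inr Inl p unfolding Iset_def by (auto split: if_splits)
        then obtain i where i: "i < m" "a i \<noteq> 0" "u = w i \<or> u = - w i" unfolding Ra_def by blast
        have mem: "(\<lambda>x. a i * deriv tanh (w i \<bullet> x) * x $ t) \<in> ?S" using i by blast
        have Du: "Dt (u \<bullet> x) = Dt (w i \<bullet> x)" for x using i(3) by (auto simp: inner_minus_left)
        have "g = fscale (1 / a i) (\<lambda>x. a i * deriv tanh (w i \<bullet> x) * x $ t)"
          using j Inr Inl p i(2) Du by (simp add: phi_def fscale_def fun_eq_iff dt)
        then show ?thesis using module.span_scale[OF MS module.span_base[OF MS mem]] by simp
      next
        case (Inr t)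
        have z using j \<open>j = Inr j'\<close> Inr unfolding Iset_def by (auto split: if_splits)
        then obtain i where i: "i < m" "w i = 0" "a i \<noteq> 0" unfolding z_def by blast
        have mem: "(\<lambda>x. a i * deriv tanh (w i \<bullet> x) * x $ t) \<in> ?S" using i by blast
        have "g = fscale (1 / a i) (\<lambda>x. a i * deriv tanh (w i \<bullet> x) * x $ t)"
          using j \<open>j = Inr j'\<close> Inr i by (simp add: phi_def fscale_def fun_eq_iff dt)
        then show ?thesis using module.span_scale[OF MS module.span_base[OF MS mem]] by simp
      qed
    qed
  qed
  have "module.span fscale ?S = module.span fscale B"
    using module.span_eq[OF MS] SB BS by blast
  then have "fun_dim (fun_span ?S) = card B"
    using vector_space.dim_span_eq_card_independent[OF vector_space_fscale ind] by simp
  then show ?thesis unfolding cardB cV cVa cardZ by (simp add: algebra_simps)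
qed



theorem mainTheorem14:
  fixes m :: nat
    and w :: "nat \<Rightarrow> real ^ 'n"
    and a :: "nat \<Rightarrow> real"
  shows "real (fun_dim (fun_span
            ({(\<lambda>x::real ^ 'n. tanh (w i \<bullet> x)) | i. i < m} \<union>
             {(\<lambda>x::real ^ 'n. a i * deriv tanh (w i \<bullet> x) * x $ t) | i t. i < m})))
       = real (card {v. \<exists>i<m. w i \<noteq> 0 \<and> (v = w i \<or> v = - w i)}) / 2
         + (real (card {v. \<exists>i<m. w i \<noteq> 0 \<and> a i \<noteq> 0 \<and> (v = w i \<or> v = - w i)}) / 2
            + real (card {v. \<exists>i<m. w i = 0 \<and> a i \<noteq> 0 \<and> v = w i})) * real CARD('n)"
  by (rule main_aux)


end
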